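(* Let $(X,d)$ be a path-connected compact metric space, $x_0\in X$, $n\geq1$. Then the topology on $\pi_n(X,x_0)$ induced by the pseudometric $\rho$ is at least as fine as the shape topology on $\pi_n(X,x_0)$.
   Context: $\Omega^n(X,x_0)$ is the set of continuous maps $\alpha:[0,1]^n\to X$ with $\alpha(\partial[0,1]^n)=\{x_0\}$, with uniform metric $\mu(\alpha,\beta)=\sup_t d(\alpha(t),\beta(t))$, and $\rho(a,b)=\inf\{\mu(\alpha,\beta)\mid\alpha\in a,\beta\in b\}$. Shape topology: let $\mathrm{cov}(X)$ be the set of pairs $(\mathscr{U},U_0)$, $\mathscr{U}$ a locally finite open cover of $X$ and $U_0\in\mathscr{U}$ containing $x_0$. Let $|N(\mathscr{U})|$ be the geometric realization of the nerve of $\mathscr{U}$. A partition of unity $\{\phi_U\}$ subordinate to $\mathscr{U}$ with $\phi_{U_0}(x_0)=1$ gives a canonical map $p_{\mathscr{U}}:(X,x_0)\to(|N(\mathscr{U})|,U_0)$ with barycentric coordinates $\phi_U(x)$. The shape topology is the group topology on $\pi_n(X,x_0)$ having the subgroups $\ker(p_{\mathscr{U}\#}:\pi_n(X,x_0)\to\pi_n(|N(\mathscr{U})|,U_0))$, $(\mathscr{U},U_0)\in\mathrm{cov}(X)$, as a neighborhood base of the identity (equivalently the initial topology with respect to the canonical homomorphism to the shape homotopy group $\varprojlim\pi_n(|N(\mathscr{U})|,U_0)$ of discrete groups). *)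

theory Defs
  imports "HOL-Analysis.Analysis"
begin

definition ucube :: "(real^'n) set" where
  "ucube = cbox 0 1"

definition ucube_bd :: "(real^'n) set" where
  "ucube_bd = cbox 0 1 - box 0 1"

text \<open>As HOL functions are total, we normalise maps to take the value x0 outside
  the open cube (i.e. on the boundary and outside the cube).\<close>
definition Omega_n :: "'a topology \<Rightarrow> 'a \<Rightarrow> (real^'n \<Rightarrow> 'a) set" where
  "Omega_n X x0 = {\<alpha>. continuous_map (top_of_set ucube) X \<alpha> \<and>
                        (\<forall>t. t \<notin> box 0 1 \<longrightarrow> \<alpha> t = x0)}"

definition hrel :: "'a topology \<Rightarrow> 'a \<Rightarrow> (real^'n \<Rightarrow> 'a) \<Rightarrow> (real^'n \<Rightarrow> 'a) \<Rightarrow> bool" where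
  "hrel X x0 \<alpha> \<beta> =
     homotopic_with (\<lambda>h. \<forall>t\<in>ucube_bd. h t = x0) (top_of_set ucube) X \<alpha> \<beta>"

definition hclass :: "'a topology \<Rightarrow> 'a \<Rightarrow> (real^'n \<Rightarrow> 'a) \<Rightarrow> (real^'n \<Rightarrow> 'a) set" where
  "hclass X x0 \<alpha> = {\<beta> \<in> Omega_n X x0. hrel X x0 \<alpha> \<beta>}"

definition homotopy_group :: "'a topology \<Rightarrow> 'a \<Rightarrow> (real^'n \<Rightarrow> 'a) set set" where
  "homotopy_group X x0 = hclass X x0 ` Omega_n X x0"

definition induced_hom :: "('a \<Rightarrow> 'b) \<Rightarrow> 'b topology \<Rightarrow> 'b \<Rightarrow>
      (real^'n \<Rightarrow> 'a) set \<Rightarrow> (real^'n \<Rightarrow> 'b) set" where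
  "induced_hom f Y y0 a = hclass Y y0 (f \<circ> (SOME \<alpha>. \<alpha> \<in> a))"

definition umetric :: "(real^'n \<Rightarrow> 'a::metric_space) \<Rightarrow> (real^'n \<Rightarrow> 'a) \<Rightarrow> real" where
  "umetric \<alpha> \<beta> = Sup ((\<lambda>t. dist (\<alpha> t) (\<beta> t)) ` ucube)"

definition rho :: "(real^'n \<Rightarrow> 'a::metric_space) set \<Rightarrow> (real^'n \<Rightarrow> 'a) set \<Rightarrow> real" where
  "rho a b = Inf {umetric \<alpha> \<beta> | \<alpha> \<beta>. \<alpha> \<in> a \<and> \<beta> \<in> b}"

definition rho_open :: "'a::metric_space set \<Rightarrow> 'a \<Rightarrow> (real^'n \<Rightarrow> 'a) set set \<Rightarrow> bool" where
  "rho_open S x0 A \<longleftrightarrow> A \<subseteq> homotopy_group (top_of_set S) x0 \<and>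
     (\<forall>a\<in>A. \<exists>e>0. \<forall>b\<in>homotopy_group (top_of_set S) x0. rho a b < e \<longrightarrow> b \<in> A)"

definition lf_open_cover :: "'a topology \<Rightarrow> 'a set set \<Rightarrow> bool" where
  "lf_open_cover X \<U> \<longleftrightarrow> (\<forall>U\<in>\<U>. openin X U) \<and> \<Union>\<U> = topspace X \<and> locally_finite_in X \<U>"

definition pou_subordinate :: "'a topology \<Rightarrow> 'a set set \<Rightarrow> 'a set \<Rightarrow> 'a \<Rightarrow> ('a set \<Rightarrow> 'a \<Rightarrow> real) \<Rightarrow> bool" where
  "pou_subordinate X \<U> U0 x0 \<phi> \<longleftrightarrow>
     (\<forall>U\<in>\<U>. continuous_map X euclideanreal (\<phi> U) \<and>
              (\<forall>x\<in>topspace X. 0 \<le> \<phi> U x) \<and>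
              X closure_of {x \<in> topspace X. \<phi> U x \<noteq> 0} \<subseteq> U) \<and>
     (\<forall>U. U \<notin> \<U> \<longrightarrow> (\<forall>x\<in>topspace X. \<phi> U x = 0)) \<and>
     (\<forall>x\<in>topspace X. finite {U \<in> \<U>. \<phi> U x \<noteq> 0} \<and>
                      (\<Sum>U \<in> {U \<in> \<U>. \<phi> U x \<noteq> 0}. \<phi> U x) = 1) \<and>
     \<phi> U0 x0 = 1"

text \<open>Geometric realization |N(U)| of the nerve, as a set of barycentric
  coordinate functions (finite support, simplex = members with nonempty
  intersection), with the topology induced from the product topology.\<close>
definition nerve_realization :: "'a set set \<Rightarrow> ('a set \<Rightarrow> real) set" where
  "nerve_realization \<U> = {f. (\<forall>U. 0 \<le> f U) \<and> (\<forall>U. f U \<noteq> 0 \<longrightarrow> U \<in> \<U>) \<and>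
      finite {U. f U \<noteq> 0} \<and> sum f {U. f U \<noteq> 0} = 1 \<and> \<Inter>{U. f U \<noteq> 0} \<noteq> {}}"

definition nerve_top :: "'a set set \<Rightarrow> ('a set \<Rightarrow> real) topology" where
  "nerve_top \<U> = subtopology euclidean (nerve_realization \<U>)"

definition nerve_vertex :: "'a set \<Rightarrow> ('a set \<Rightarrow> real)" where
  "nerve_vertex U0 = (\<lambda>U. if U = U0 then 1 else 0)"

definition canonical_map :: "('a set \<Rightarrow> 'a \<Rightarrow> real) \<Rightarrow> 'a \<Rightarrow> ('a set \<Rightarrow> real)" where
  "canonical_map \<phi> = (\<lambda>x U. \<phi> U x)"

text \<open>Shape topology: initial topology on pi_n(X,x0) w.r.t. all maps
  (p_U)_# : pi_n(X,x0) \<rightarrow> pi_n(|N(U)|,U0) with discrete targets, i.e. generated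
  by the fibres of these maps (the cosets of the kernels).\<close>
definition shape_top :: "'a topology \<Rightarrow> 'a \<Rightarrow> (real^'n \<Rightarrow> 'a) set topology" where
  "shape_top X x0 = topology_generated_by
     {{b \<in> homotopy_group X x0.
         induced_hom (canonical_map \<phi>) (nerve_top \<U>) (nerve_vertex U0) b =
         induced_hom (canonical_map \<phi>) (nerve_top \<U>) (nerve_vertex U0) a}
      | \<U> U0 \<phi> a. lf_open_cover X \<U> \<and> U0 \<in> \<U> \<and> x0 \<in> U0 \<and>
                  pou_subordinate X \<U> U0 x0 \<phi> \<and> a \<in> homotopy_group X x0}"

end

theory Submission
  imports Defs
begin

lemma pou_nonneg:
  assumes pou: "pou_subordinate (top_of_set S) \<U> U0 x0 \<phi>" and "y \<in> S"
  shows "0 \<le> \<phi> U y"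
  using assms unfolding pou_subordinate_def by (cases "U \<in> \<U>") auto

lemma pou_notin:
  assumes pou: "pou_subordinate (top_of_set S) \<U> U0 x0 \<phi>" and "y \<in> S" "U \<notin> \<U>"
  shows "\<phi> U y = 0"
  using assms unfolding pou_subordinate_def by auto

lemma pou_sum:
  assumes pou: "pou_subordinate (top_of_set S) \<U> U0 x0 \<phi>" and "y \<in> S"
  shows "finite {U \<in> \<U>. \<phi> U y \<noteq> 0}" "(\<Sum>U \<in> {U \<in> \<U>. \<phi> U y \<noteq> 0}. \<phi> U y) = 1"
  using assms unfolding pou_subordinate_def by auto

lemma nerve_mem:
  assumes pou: "pou_subordinate (top_of_set S) \<U> U0 x0 \<phi>"
    and yS: "y \<in> S" and zS: "z \<in> S" and s0: "0 \<le> s" and s1: "s \<le> 1"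
    and x: "\<forall>U. (\<phi> U y \<noteq> 0 \<or> \<phi> U z \<noteq> 0) \<longrightarrow> U \<in> \<U> \<and> x \<in> U"
  shows "(\<lambda>U. (1-s)*\<phi> U y + s*\<phi> U z) \<in> nerve_realization \<U>"
proof -
  define f where "f = (\<lambda>U. (1-s)*\<phi> U y + s*\<phi> U z)"
  define Sy where "Sy = {U \<in> \<U>. \<phi> U y \<noteq> 0}"
  define Sz where "Sz = {U \<in> \<U>. \<phi> U z \<noteq> 0}"
  have fy: "finite Sy" and sy: "sum (\<lambda>U. \<phi> U y) Sy = 1"
    using pou_sum[OF pou yS] by (auto simp: Sy_def)
  have fz: "finite Sz" and sz: "sum (\<lambda>U. \<phi> U z) Sz = 1"
    using pou_sum[OF pou zS] by (auto simp: Sz_def)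
  have nn: "\<And>U. 0 \<le> f U"
    unfolding f_def using pou_nonneg[OF pou yS] pou_nonneg[OF pou zS] s0 s1 by simp
  have nz: "\<And>U. f U \<noteq> 0 \<Longrightarrow> \<phi> U y \<noteq> 0 \<or> \<phi> U z \<noteq> 0" by (auto simp: f_def)
  have supp: "{U. f U \<noteq> 0} \<subseteq> Sy \<union> Sz"
    using x nz unfolding Sy_def Sz_def by blast
  have fin: "finite {U. f U \<noteq> 0}" using supp fy fz finite_subset by blast
  have "sum f {U. f U \<noteq> 0} = sum f (Sy \<union> Sz)"
    by (rule sum.mono_neutral_left) (use fy fz supp in auto)
  also have "\<dots> = (1-s) * sum (\<lambda>U. \<phi> U y) (Sy \<union> Sz) + s * sum (\<lambda>U. \<phi> U z) (Sy \<union> Sz)"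
    by (simp add: f_def sum.distrib sum_distrib_left)
  also have "sum (\<lambda>U. \<phi> U y) (Sy \<union> Sz) = sum (\<lambda>U. \<phi> U y) Sy"
    by (rule sum.mono_neutral_right) (use fy fz in \<open>auto simp: Sy_def Sz_def\<close>)
  also have "sum (\<lambda>U. \<phi> U z) (Sy \<union> Sz) = sum (\<lambda>U. \<phi> U z) Sz"
    by (rule sum.mono_neutral_right) (use fy fz in \<open>auto simp: Sy_def Sz_def\<close>)
  finally have sum1: "sum f {U. f U \<noteq> 0} = 1" using sy sz by simp
  have "x \<in> \<Inter>{U. f U \<noteq> 0}" using x nz by blast
  then have "\<Inter>{U. f U \<noteq> 0} \<noteq> {}" by blast
  moreover have "\<forall>U. f U \<noteq> 0 \<longrightarrow> U \<in> \<U>" using x nz by blast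
  ultimately show ?thesis
    using nn fin sum1 unfolding nerve_realization_def f_def[symmetric] by blast
qed

lemma pou_local:
  assumes lf: "lf_open_cover (top_of_set S) \<U>"
    and pou: "pou_subordinate (top_of_set S) \<U> U0 x0 \<phi>" and xS: "x \<in> S"
  shows "\<exists>r>0. \<forall>y\<in>S. dist x y < r \<longrightarrow> (\<forall>U. \<phi> U y \<noteq> 0 \<longrightarrow> U \<in> \<U> \<and> x \<in> U)"
proof -
  let ?X = "top_of_set S"
  define C where "C = (\<lambda>U. ?X closure_of {x \<in> topspace ?X. \<phi> U x \<noteq> 0})"
  have CU: "\<And>U. U \<in> \<U> \<Longrightarrow> C U \<subseteq> U"
    using pou unfolding pou_subordinate_def C_def by blast
  obtain V where V: "openin ?X V" "x \<in> V" "finite {U \<in> \<U>. U \<inter> V \<noteq> {}}"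
  proof -
    have "\<forall>x\<in>topspace ?X. \<exists>V. openin ?X V \<and> x \<in> V \<and> finite {U \<in> \<U>. U \<inter> V \<noteq> {}}"
      using lf unfolding lf_open_cover_def locally_finite_in_def by blast
    then show ?thesis using xS that by auto
  qed
  define F where "F = {U \<in> \<U>. U \<inter> V \<noteq> {} \<and> x \<notin> C U}"
  have "finite F" using V(3) unfolding F_def by (rule finite_subset[rotated]) auto
  then have "closedin ?X (\<Union>(C ` F))"
    by (intro closedin_Union) (auto simp: C_def)
  then have "openin ?X (S - \<Union>(C ` F))"
    by (metis closedin_def topspace_euclidean_subtopology)
  then have W: "openin ?X (V \<inter> (S - \<Union>(C ` F)))" using V(1) by blast
  have xW: "x \<in> V \<inter> (S - \<Union>(C ` F))" using V(2) xS by (auto simp: F_def)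
  obtain r where r: "r > 0" "ball x r \<inter> S \<subseteq> V \<inter> (S - \<Union>(C ` F))"
    using W xW unfolding openin_contains_ball by blast
  show ?thesis
  proof (intro exI[of _ r] conjI ballI impI allI)
    show "r > 0" by fact
    fix y U assume yS: "y \<in> S" and d: "dist x y < r" and nz: "\<phi> U y \<noteq> 0"
    show U: "U \<in> \<U>" using pou_notin[OF pou yS] nz by blast
    have yW: "y \<in> V \<inter> (S - \<Union>(C ` F))" using r(2) yS d by auto
    have yC: "y \<in> C U" unfolding C_def
      using yS nz closure_of_subset[of "{x \<in> topspace ?X. \<phi> U x \<noteq> 0}" ?X] by auto
    then have "y \<in> U" using CU[OF U] by blast
    then have "U \<inter> V \<noteq> {}" using yW by blast
    have "x \<in> C U"
    proof (rule ccontr)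
      assume "x \<notin> C U"
      then have "U \<in> F" using U \<open>U \<inter> V \<noteq> {}\<close> by (auto simp: F_def)
      then show False using yW yC by blast
    qed
    then show "x \<in> U" using CU[OF U] by blast
  qed
qed

lemma pou_lebesgue:
  assumes "compact S" and lf: "lf_open_cover (top_of_set S) \<U>"
    and pou: "pou_subordinate (top_of_set S) \<U> U0 x0 \<phi>"
  shows "\<exists>\<delta>>0. \<forall>y\<in>S. \<forall>z\<in>S. dist y z < \<delta> \<longrightarrow>
           (\<exists>x. \<forall>U. (\<phi> U y \<noteq> 0 \<or> \<phi> U z \<noteq> 0) \<longrightarrow> U \<in> \<U> \<and> x \<in> U)"
proof -
  have "\<forall>x\<in>S. \<exists>r>0. \<forall>y\<in>S. dist x y < r \<longrightarrow> (\<forall>U. \<phi> U y \<noteq> 0 \<longrightarrow> U \<in> \<U> \<and> x \<in> U)"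
    using pou_local[OF lf pou] by blast
  then obtain r where rr: "\<forall>x\<in>S. r x > 0 \<and> (\<forall>y\<in>S. dist x y < r x \<longrightarrow> (\<forall>U. \<phi> U y \<noteq> 0 \<longrightarrow> U \<in> \<U> \<and> x \<in> U))"
    by (rule bchoice[THEN exE]) blast
  have r1: "\<And>x. x \<in> S \<Longrightarrow> r x > 0" using rr by blast
  have r2: "\<And>x y U. x \<in> S \<Longrightarrow> y \<in> S \<Longrightarrow> dist x y < r x \<Longrightarrow> \<phi> U y \<noteq> 0 \<Longrightarrow> U \<in> \<U> \<and> x \<in> U"
    using rr by blast
  have cov: "S \<subseteq> \<Union>((\<lambda>x. ball x (r x)) ` S)" using r1 by force
  obtain \<delta> where d: "\<delta> > 0" "\<And>x. x \<in> S \<Longrightarrow> \<exists>G \<in> (\<lambda>x. ball x (r x)) ` S. ball x \<delta> \<subseteq> G"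
    by (rule Heine_Borel_lemma[OF assms(1) cov]) auto
  show ?thesis
  proof (intro exI[of _ \<delta>] conjI ballI impI)
    fix y z assume yS: "y \<in> S" and zS: "z \<in> S" and dyz: "dist y z < \<delta>"
    obtain x where xS: "x \<in> S" and sub: "ball y \<delta> \<subseteq> ball x (r x)" using d(2)[OF yS] by blast
    have "y \<in> ball y \<delta>" "z \<in> ball y \<delta>" using d(1) dyz by auto
    then have "y \<in> ball x (r x)" "z \<in> ball x (r x)" using sub by blast+
    then have dy: "dist x y < r x" and dz: "dist x z < r x" by auto
    show "\<exists>x. \<forall>U. (\<phi> U y \<noteq> 0 \<or> \<phi> U z \<noteq> 0) \<longrightarrow> U \<in> \<U> \<and> x \<in> U"
    proof (intro exI[of _ x] allI impI)
      fix U assume "\<phi> U y \<noteq> 0 \<or> \<phi> U z \<noteq> 0"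
      then show "U \<in> \<U> \<and> x \<in> U"
      proof
        assume "\<phi> U y \<noteq> 0" then show ?thesis using r2[OF xS yS dy] by blast
      next
        assume "\<phi> U z \<noteq> 0" then show ?thesis using r2[OF xS zS dz] by blast
      qed
    qed
  next
    show "\<delta> > 0" by (rule d(1))
  qed
qed

lemma pou_coord_cont:
  assumes pou: "pou_subordinate (top_of_set S) \<U> U0 x0 \<phi>"
    and g: "continuous_map X (top_of_set S) g"
  shows "continuous_map X euclideanreal (\<lambda>w. \<phi> U (g w))"
proof (cases "U \<in> \<U>")
  case True
  then have "continuous_map (top_of_set S) euclideanreal (\<phi> U)"
    using pou unfolding pou_subordinate_def by blast
  then have "continuous_map X euclideanreal (\<phi> U \<circ> g)" by (rule continuous_map_compose[OF g])
  then show ?thesis unfolding comp_def .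
next
  case False
  show ?thesis
  proof (rule continuous_map_eq[of _ _ "\<lambda>w. 0"])
    fix w assume "w \<in> topspace X"
    then have "g w \<in> topspace (top_of_set S)" using continuous_map_funspace[OF g] by blast
    then have "g w \<in> S" by simp
    then show "0 = \<phi> U (g w)" using pou_notin[OF pou _ False] by simp
  qed simp
qed

lemma pou_p_cont:
  assumes pou: "pou_subordinate (top_of_set S) \<U> U0 x0 \<phi>"
  shows "continuous_map (top_of_set S) (nerve_top \<U>) (canonical_map \<phi>)"
  unfolding nerve_top_def continuous_map_in_subtopology
proof
  show "continuous_map (top_of_set S) euclidean (canonical_map \<phi>)"
    unfolding euclidean_product_topology[symmetric] continuous_map_componentwise_UNIV canonical_map_def
    using pou_coord_cont[OF pou continuous_map_id[of "top_of_set S"]] by simp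
  show "canonical_map \<phi> \<in> topspace (top_of_set S) \<rightarrow> nerve_realization \<U>"
  proof
    fix y assume "y \<in> topspace (top_of_set S)"
    then have yS: "y \<in> S" by simp
    have "\<forall>U. (\<phi> U y \<noteq> 0 \<or> \<phi> U y \<noteq> 0) \<longrightarrow> U \<in> \<U> \<and> y \<in> U"
    proof (intro allI impI)
      fix U assume "\<phi> U y \<noteq> 0 \<or> \<phi> U y \<noteq> 0"
      then have nz: "\<phi> U y \<noteq> 0" by simp
      then show U: "U \<in> \<U> \<and> y \<in> U"
      proof -
        have U: "U \<in> \<U>" using pou_notin[OF pou yS] nz by blast
        have "y \<in> top_of_set S closure_of {x \<in> topspace (top_of_set S). \<phi> U x \<noteq> 0}"
          using yS nz closure_of_subset[of "{x \<in> topspace (top_of_set S). \<phi> U x \<noteq> 0}" "top_of_set S"] by auto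
        then show ?thesis using U pou unfolding pou_subordinate_def by blast
      qed
    qed
    from nerve_mem[OF pou yS yS _ _ this, of 0]
    show "canonical_map \<phi> y \<in> nerve_realization \<U>" by (simp add: canonical_map_def)
  qed
qed

lemma pou_p_x0:
  assumes pou: "pou_subordinate (top_of_set S) \<U> U0 x0 \<phi>" and "U0 \<in> \<U>" "x0 \<in> S"
  shows "canonical_map \<phi> x0 = nerve_vertex U0"
proof
  fix U
  have f: "finite {U \<in> \<U>. \<phi> U x0 \<noteq> 0}" and s: "(\<Sum>U \<in> {U \<in> \<U>. \<phi> U x0 \<noteq> 0}. \<phi> U x0) = 1"
    using pou_sum[OF pou assms(3)] by auto
  have one: "\<phi> U0 x0 = 1" using pou unfolding pou_subordinate_def by blast
  show "canonical_map \<phi> x0 U = nerve_vertex U0 U"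
  proof (cases "U = U0")
    case True then show ?thesis by (simp add: canonical_map_def nerve_vertex_def one)
  next
    case False
    show ?thesis
    proof (rule ccontr)
      assume "canonical_map \<phi> x0 U \<noteq> nerve_vertex U0 U"
      then have nz: "\<phi> U x0 \<noteq> 0" using False by (simp add: canonical_map_def nerve_vertex_def)
      then have U: "U \<in> \<U>" using pou_notin[OF pou assms(3)] by blast
      have pos: "\<phi> U x0 > 0" using nz pou_nonneg[OF pou assms(3), of U] by simp
      have "(\<Sum>V \<in> {U, U0}. \<phi> V x0) \<le> (\<Sum>U \<in> {U \<in> \<U>. \<phi> U x0 \<noteq> 0}. \<phi> U x0)"
        by (rule sum_mono2[OF f]) (use U assms(2) nz one pou_nonneg[OF pou assms(3)] in auto)
      then show False using s one pos False by simp
    qed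
  qed
qed

lemma Omega_S:
  assumes "\<alpha> \<in> Omega_n (top_of_set S) x0" "x0 \<in> S"
  shows "\<alpha> t \<in> S"
proof (cases "t \<in> box 0 1")
  case True
  then have "t \<in> ucube" unfolding ucube_def using box_subset_cbox by blast
  moreover have "continuous_map (top_of_set ucube) (top_of_set S) \<alpha>"
    using assms(1) unfolding Omega_n_def by blast
  ultimately have "\<alpha> t \<in> topspace (top_of_set S)"
    using continuous_map_funspace[of "top_of_set ucube" "top_of_set S" \<alpha>] by auto
  then show ?thesis by simp
next
  case False
  have "\<forall>t. t \<notin> box 0 1 \<longrightarrow> \<alpha> t = x0" using assms(1) unfolding Omega_n_def by blast
  then show ?thesis using False assms(2) by simp
qed

lemma hrel_sym: "hrel X x0 \<alpha> \<beta> \<Longrightarrow> hrel X x0 \<beta> \<alpha>"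
  unfolding hrel_def by (rule homotopic_with_symD)

lemma hrel_trans: "hrel X x0 \<alpha> \<beta> \<Longrightarrow> hrel X x0 \<beta> \<gamma> \<Longrightarrow> hrel X x0 \<alpha> \<gamma>"
  unfolding hrel_def by (rule homotopic_with_trans)

lemma hrel_refl:
  fixes \<alpha> :: "real^'n \<Rightarrow> 'a"
  shows "\<alpha> \<in> Omega_n X x0 \<Longrightarrow> hrel X x0 \<alpha> \<alpha>"
proof -
  assume a: "\<alpha> \<in> Omega_n X x0"
  have "continuous_map (top_of_set ucube) X \<alpha>" using a unfolding Omega_n_def by blast
  moreover have "\<forall>t\<in>ucube_bd. \<alpha> t = x0"
  proof
    fix t :: "real^'n" assume "t \<in> ucube_bd"
    then have "t \<notin> box 0 1" unfolding ucube_bd_def by simp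
    moreover have "\<forall>t. t \<notin> box 0 1 \<longrightarrow> \<alpha> t = x0" using a unfolding Omega_n_def by blast
    ultimately show "\<alpha> t = x0" by simp
  qed
  ultimately show ?thesis unfolding hrel_def by simp
qed

lemma hclass_mem: "\<gamma> \<in> Omega_n X x0 \<Longrightarrow> \<gamma> \<in> hclass X x0 \<gamma>"
  unfolding hclass_def by (simp add: hrel_refl)

lemma hclass_eq: "hrel Y y0 \<gamma> \<gamma>' \<Longrightarrow> hclass Y y0 \<gamma> = hclass Y y0 \<gamma>'"
proof -
  assume h: "hrel Y y0 \<gamma> \<gamma>'"
  have "hrel Y y0 \<gamma> \<beta> \<longleftrightarrow> hrel Y y0 \<gamma>' \<beta>" for \<beta>
    using h hrel_sym[OF h] hrel_trans by metis
  then show ?thesis unfolding hclass_def by simp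
qed

lemma hg_some:
  assumes "a \<in> homotopy_group X x0"
  shows "(SOME \<alpha>. \<alpha> \<in> a) \<in> a"
proof -
  obtain \<gamma> where "\<gamma> \<in> Omega_n X x0" "a = hclass X x0 \<gamma>"
    using assms unfolding homotopy_group_def by blast
  then have "\<gamma> \<in> a" using hclass_mem[of \<gamma> X x0] by simp
  then show ?thesis by (rule someI[where P="\<lambda>\<alpha>. \<alpha> \<in> a"])
qed

lemma hg_rel:
  assumes "a \<in> homotopy_group X x0" "\<alpha> \<in> a" "\<beta> \<in> a"
  shows "hrel X x0 \<alpha> \<beta> \<and> \<alpha> \<in> Omega_n X x0"
proof -
  obtain \<gamma> where "\<gamma> \<in> Omega_n X x0" "a = hclass X x0 \<gamma>"
    using assms unfolding homotopy_group_def by blast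
  then have "hrel X x0 \<gamma> \<alpha>" "hrel X x0 \<gamma> \<beta>" "\<alpha> \<in> Omega_n X x0"
    using assms unfolding hclass_def by auto
  then show ?thesis using hrel_sym hrel_trans by metis
qed

lemma key_close:
  fixes S :: "'a::metric_space set" and x0 :: 'a and \<alpha> \<beta> :: "real^'n \<Rightarrow> 'a"
  assumes x0S: "x0 \<in> S" and U0: "U0 \<in> \<U>"
    and pou: "pou_subordinate (top_of_set S) \<U> U0 x0 \<phi>"
    and dd: "\<And>y z. y \<in> S \<Longrightarrow> z \<in> S \<Longrightarrow> dist y z < \<delta> \<Longrightarrow>
               \<exists>x. \<forall>U. (\<phi> U y \<noteq> 0 \<or> \<phi> U z \<noteq> 0) \<longrightarrow> U \<in> \<U> \<and> x \<in> U"
    and \<alpha>: "\<alpha> \<in> Omega_n (top_of_set S) x0" and \<beta>: "\<beta> \<in> Omega_n (top_of_set S) x0"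
    and dist: "\<And>t. t \<in> ucube \<Longrightarrow> dist (\<alpha> t) (\<beta> t) < \<delta>"
  shows "hrel (nerve_top \<U>) (nerve_vertex U0) (canonical_map \<phi> \<circ> \<alpha>) (canonical_map \<phi> \<circ> \<beta>)"
proof -
  have \<alpha>S: "\<And>t. \<alpha> t \<in> S" using Omega_S[OF \<alpha> x0S] .
  have \<beta>S: "\<And>t. \<beta> t \<in> S" using Omega_S[OF \<beta> x0S] .
  have \<alpha>c: "continuous_map (top_of_set ucube) (top_of_set S) \<alpha>" using \<alpha> unfolding Omega_n_def by blast
  have \<beta>c: "continuous_map (top_of_set ucube) (top_of_set S) \<beta>" using \<beta> unfolding Omega_n_def by blast
  have \<alpha>bd: "\<forall>t. t \<notin> box 0 1 \<longrightarrow> \<alpha> t = x0" using \<alpha> unfolding Omega_n_def by blast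
  have \<beta>bd: "\<forall>t. t \<notin> box 0 1 \<longrightarrow> \<beta> t = x0" using \<beta> unfolding Omega_n_def by blast
  define h where "h = (\<lambda>w::real \<times> (real^'n). \<lambda>U. (1 - fst w) * \<phi> U (\<alpha> (snd w)) + fst w * \<phi> U (\<beta> (snd w)))"
  let ?T = "prod_topology (top_of_set {0..1::real}) (top_of_set (ucube::(real^'n) set))"
  have g1: "continuous_map ?T (top_of_set S) (\<lambda>w. \<alpha> (snd w))"
    using continuous_map_compose[OF continuous_map_snd \<alpha>c] unfolding comp_def .
  have g2: "continuous_map ?T (top_of_set S) (\<lambda>w. \<beta> (snd w))"
    using continuous_map_compose[OF continuous_map_snd \<beta>c] unfolding comp_def .
  have ca: "continuous_map ?T euclideanreal (\<lambda>w. \<phi> U (\<alpha> (snd w)))" for U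
    by (rule pou_coord_cont[OF pou g1])
  have cb: "continuous_map ?T euclideanreal (\<lambda>w. \<phi> U (\<beta> (snd w)))" for U
    by (rule pou_coord_cont[OF pou g2])
  have cf: "continuous_map ?T euclideanreal fst"
    using continuous_map_into_fulltopology[OF continuous_map_fst] .
  have c1: "continuous_map ?T euclideanreal (\<lambda>w. 1 - fst w)"
    by (rule continuous_map_diff[OF _ cf]) simp
  have hc: "continuous_map ?T euclidean h"
    unfolding euclidean_product_topology[symmetric] continuous_map_componentwise_UNIV h_def
    by (intro allI continuous_map_add continuous_map_real_mult c1 cf ca cb)
  have hN: "h w \<in> nerve_realization \<U>" if "w \<in> topspace ?T" for w
  proof -
    obtain s t where w: "w = (s, t)" by (cases w)
    have s: "0 \<le> s" "s \<le> 1" and t: "t \<in> ucube" using that w by auto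
    obtain x where x: "\<forall>U. (\<phi> U (\<alpha> t) \<noteq> 0 \<or> \<phi> U (\<beta> t) \<noteq> 0) \<longrightarrow> U \<in> \<U> \<and> x \<in> U"
      using dd[OF \<alpha>S \<beta>S dist[OF t]] by blast
    show ?thesis using nerve_mem[OF pou \<alpha>S \<beta>S s x] by (simp add: h_def w)
  qed
  have hcN: "continuous_map ?T (nerve_top \<U>) h"
    unfolding nerve_top_def continuous_map_in_subtopology using hc hN by blast
  have px0: "canonical_map \<phi> x0 = nerve_vertex U0" by (rule pou_p_x0[OF pou U0 x0S])
  have h0: "\<forall>x. h (0, x) = (canonical_map \<phi> \<circ> \<alpha>) x"
    by (simp add: h_def canonical_map_def)
  have h1: "\<forall>x. h (1, x) = (canonical_map \<phi> \<circ> \<beta>) x"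
    by (simp add: h_def canonical_map_def)
  have hp: "\<forall>s\<in>{0..1}. \<forall>t\<in>ucube_bd. h (s, t) = nerve_vertex U0"
  proof (intro ballI)
    fix s :: real and t :: "real^'n" assume "t \<in> ucube_bd"
    then have "t \<notin> box 0 1" unfolding ucube_bd_def by simp
    then have "\<alpha> t = x0" "\<beta> t = x0" using \<alpha>bd \<beta>bd by auto
    then have "h (s, t) = canonical_map \<phi> x0"
      by (simp add: h_def canonical_map_def fun_eq_iff algebra_simps)
    then show "h (s, t) = nerve_vertex U0" using px0 by simp
  qed
  show ?thesis unfolding hrel_def homotopic_with_def
    using hcN h0 h1 hp by blast
qed

lemma key:
  fixes S :: "'a::metric_space set" and x0 :: 'a
  assumes cS: "compact S" and x0S: "x0 \<in> S" and lf: "lf_open_cover (top_of_set S) \<U>"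
    and U0: "U0 \<in> \<U>" and pou: "pou_subordinate (top_of_set S) \<U> U0 x0 \<phi>"
  shows "\<exists>\<delta>>0. \<forall>a\<in>(homotopy_group (top_of_set S) x0 :: (real^'n \<Rightarrow> 'a) set set).
           \<forall>b\<in>homotopy_group (top_of_set S) x0. rho a b < \<delta> \<longrightarrow>
      induced_hom (canonical_map \<phi>) (nerve_top \<U>) (nerve_vertex U0) b =
      induced_hom (canonical_map \<phi>) (nerve_top \<U>) (nerve_vertex U0) a"
proof -
  obtain \<delta> where d: "\<delta> > 0" and dd: "\<And>y z. y \<in> S \<Longrightarrow> z \<in> S \<Longrightarrow> dist y z < \<delta> \<Longrightarrow>
               \<exists>x. \<forall>U. (\<phi> U y \<noteq> 0 \<or> \<phi> U z \<noteq> 0) \<longrightarrow> U \<in> \<U> \<and> x \<in> U"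
    using pou_lebesgue[OF cS lf pou] by blast
  let ?X = "top_of_set S"
  let ?p = "canonical_map \<phi>"
  let ?N = "nerve_top \<U>"
  let ?v = "nerve_vertex U0"
  have pc: "continuous_map ?X ?N ?p" by (rule pou_p_cont[OF pou])
  have px0: "?p x0 = ?v" by (rule pou_p_x0[OF pou U0 x0S])
  have comp: "hrel ?N ?v (?p \<circ> \<alpha>) (?p \<circ> \<alpha>')" if "hrel ?X x0 \<alpha> \<alpha>'" for \<alpha> \<alpha>' :: "real^'n \<Rightarrow> 'a"
    using that unfolding hrel_def
    by (rule homotopic_with_compose_continuous_map_left[OF _ pc]) (simp add: px0)
  have bS: "bounded S" using cS by (rule compact_imp_bounded)
  show ?thesis
  proof (intro exI[of _ \<delta>] conjI ballI impI)
    show "\<delta> > 0" by (rule d)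
    fix a b :: "(real^'n \<Rightarrow> 'a) set"
    assume a: "a \<in> homotopy_group ?X x0" and b: "b \<in> homotopy_group ?X x0" and r: "rho a b < \<delta>"
    let ?M = "{umetric \<alpha> \<beta> | \<alpha> \<beta>. \<alpha> \<in> a \<and> \<beta> \<in> b}"
    have "?M \<noteq> {}" using hg_some[OF a] hg_some[OF b] by blast
    then obtain m where "m \<in> ?M" "m < \<delta>" using cInf_lessD[of ?M \<delta>] r unfolding rho_def by blast
    then obtain \<alpha> \<beta> where \<alpha>a: "\<alpha> \<in> a" and \<beta>b: "\<beta> \<in> b" and u: "umetric \<alpha> \<beta> < \<delta>" by blast
    have \<alpha>O: "\<alpha> \<in> Omega_n ?X x0" using hg_rel[OF a \<alpha>a \<alpha>a] by blast
    have \<beta>O: "\<beta> \<in> Omega_n ?X x0" using hg_rel[OF b \<beta>b \<beta>b] by blast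
    have bdd: "bdd_above ((\<lambda>t. dist (\<alpha> t) (\<beta> t)) ` ucube)"
      by (rule bdd_aboveI2[where M="diameter S"])
         (rule diameter_bounded_bound[OF bS Omega_S[OF \<alpha>O x0S] Omega_S[OF \<beta>O x0S]])
    have dist: "dist (\<alpha> t) (\<beta> t) < \<delta>" if "t \<in> ucube" for t
    proof -
      have "dist (\<alpha> t) (\<beta> t) \<le> umetric \<alpha> \<beta>"
        unfolding umetric_def using cSup_upper[OF imageI[OF that] bdd] .
      then show ?thesis using u by simp
    qed
    have h1: "hrel ?N ?v (?p \<circ> \<alpha>) (?p \<circ> \<beta>)"
      by (rule key_close[OF x0S U0 pou dd \<alpha>O \<beta>O dist]) auto
    have "hrel ?X x0 (SOME \<alpha>. \<alpha> \<in> a) \<alpha>" using hg_rel[OF a hg_some[OF a] \<alpha>a] by blast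
    then have h2: "hrel ?N ?v (?p \<circ> (SOME \<alpha>. \<alpha> \<in> a)) (?p \<circ> \<alpha>)" by (rule comp)
    have "hrel ?X x0 \<beta> (SOME \<alpha>. \<alpha> \<in> b)" using hg_rel[OF b \<beta>b hg_some[OF b]] by blast
    then have h3: "hrel ?N ?v (?p \<circ> \<beta>) (?p \<circ> (SOME \<alpha>. \<alpha> \<in> b))" by (rule comp)
    have "hrel ?N ?v (?p \<circ> (SOME \<alpha>. \<alpha> \<in> a)) (?p \<circ> (SOME \<alpha>. \<alpha> \<in> b))"
      using hrel_trans[OF hrel_trans[OF h2 h1] h3] .
    then show "induced_hom ?p ?N ?v b = induced_hom ?p ?N ?v a"
      unfolding induced_hom_def using hclass_eq by metis
  qed
qed

theorem proposition5p2:
  fixes S :: "'a::metric_space set" and x0 :: 'a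
    and A :: "(real^'n \<Rightarrow> 'a) set set"
  assumes "compact S" and "path_connected S" and "x0 \<in> S"
    and "openin (shape_top (top_of_set S) x0) A"
  shows "rho_open S x0 A"
proof -
  have "generate_topology_on {{b \<in> homotopy_group (top_of_set S) x0.
         induced_hom (canonical_map \<phi>) (nerve_top \<U>) (nerve_vertex U0) b =
         induced_hom (canonical_map \<phi>) (nerve_top \<U>) (nerve_vertex U0) a}
      | \<U> U0 \<phi> a. lf_open_cover (top_of_set S) \<U> \<and> U0 \<in> \<U> \<and> x0 \<in> U0 \<and>
                  pou_subordinate (top_of_set S) \<U> U0 x0 \<phi> \<and> a \<in> homotopy_group (top_of_set S) x0} A"
    using assms(4) unfolding shape_top_def by (rule openin_topology_generated_by)
  then show ?thesis
  proof (induction rule: generate_topology_on.induct)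
    case Empty
    then show ?case unfolding rho_open_def by simp
  next
    case (Int a b)
    show ?case unfolding rho_open_def
    proof (intro conjI ballI)
      show "a \<inter> b \<subseteq> homotopy_group (top_of_set S) x0" using Int.IH unfolding rho_open_def by blast
      fix c assume c: "c \<in> a \<inter> b"
      obtain e1 where e1: "e1 > 0" "\<forall>d\<in>homotopy_group (top_of_set S) x0. rho c d < e1 \<longrightarrow> d \<in> a"
        using Int.IH(1) c unfolding rho_open_def by blast
      obtain e2 where e2: "e2 > 0" "\<forall>d\<in>homotopy_group (top_of_set S) x0. rho c d < e2 \<longrightarrow> d \<in> b"
        using Int.IH(2) c unfolding rho_open_def by blast
      show "\<exists>e>0. \<forall>d\<in>homotopy_group (top_of_set S) x0. rho c d < e \<longrightarrow> d \<in> a \<inter> b"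
        by (rule exI[of _ "min e1 e2"]) (use e1 e2 in auto)
    qed
  next
    case (UN K)
    show ?case unfolding rho_open_def
    proof (intro conjI ballI)
      show "\<Union>K \<subseteq> homotopy_group (top_of_set S) x0" using UN.IH unfolding rho_open_def by blast
      fix c assume "c \<in> \<Union>K"
      then obtain k where k: "k \<in> K" "c \<in> k" by blast
      obtain e where e: "e > 0" "\<forall>d\<in>homotopy_group (top_of_set S) x0. rho c d < e \<longrightarrow> d \<in> k"
        using UN.IH[OF k(1)] k(2) unfolding rho_open_def by blast
      show "\<exists>e>0. \<forall>d\<in>homotopy_group (top_of_set S) x0. rho c d < e \<longrightarrow> d \<in> \<Union>K"
        using e k(1) by blast
    qed
  next
    case (Basis s)
    then obtain \<U> U0 \<phi> a where s: "s = {b \<in> homotopy_group (top_of_set S) x0.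
         induced_hom (canonical_map \<phi>) (nerve_top \<U>) (nerve_vertex U0) b =
         induced_hom (canonical_map \<phi>) (nerve_top \<U>) (nerve_vertex U0) a}"
      and lf: "lf_open_cover (top_of_set S) \<U>" and U0: "U0 \<in> \<U>"
      and pou: "pou_subordinate (top_of_set S) \<U> U0 x0 \<phi>"
      by blast
    obtain \<delta> where d: "\<delta> > 0" and dd: "\<forall>c\<in>(homotopy_group (top_of_set S) x0 :: (real^'n \<Rightarrow> 'a) set set).
           \<forall>b\<in>homotopy_group (top_of_set S) x0. rho c b < \<delta> \<longrightarrow>
      induced_hom (canonical_map \<phi>) (nerve_top \<U>) (nerve_vertex U0) b =
      induced_hom (canonical_map \<phi>) (nerve_top \<U>) (nerve_vertex U0) c"
      using key[OF assms(1) assms(3) lf U0 pou] by blast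
    show ?case unfolding rho_open_def
    proof (intro conjI ballI)
      show "s \<subseteq> homotopy_group (top_of_set S) x0" unfolding s by blast
      fix c assume c: "c \<in> s"
      show "\<exists>e>0. \<forall>d\<in>homotopy_group (top_of_set S) x0. rho c d < e \<longrightarrow> d \<in> s"
      proof (intro exI[of _ \<delta>] conjI ballI impI)
        show "\<delta> > 0" by (rule d)
        fix b assume b: "b \<in> homotopy_group (top_of_set S) x0" and r: "rho c b < \<delta>"
        have cH: "c \<in> homotopy_group (top_of_set S) x0" using c unfolding s by blast
        show "b \<in> s" using dd cH b r c unfolding s by auto
      qed
    qed
  qed
qed

end
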